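(* Let $\pi:P\to M$ be a principal fibre bundle with group $G=P^{-1}P$, in the setting described in the context. There is a bijective correspondence $\theta\leftrightarrow\alpha$ between horizontal equivariant $G$-valued $k$-forms $\theta$ on $P$ and $\mathbf{gauge}(PP^{-1})$-valued $k$-forms $\alpha$ on $M$, characterized by $$u_0\cdot\theta(u_0,\dots,u_k)=\alpha(\pi(u_0),\dots,\pi(u_k))\cdot u_0$$ for every infinitesimal $k$-simplex $(u_0,\dots,u_k)$ in $P$; explicitly $\alpha(a_0,\dots,a_k)=(u_0\theta(u_0,\dots,u_k))u_0^{-1}$ for any infinitesimal $k$-simplex $(u_0,\dots,u_k)$ in $P$ lying over $(a_0,\dots,a_k)$, and $\theta(u_0,\dots,u_k)=u_0^{-1}(\alpha(\pi(u_0),\dots,\pi(u_k))u_0)$.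
   Context: Setting: $\Phi$ is a groupoid whose object set contains a set $M$ and an object $*\notin M$; $P$ is the set of arrows of $\Phi$ with domain $*$ and codomain in $M$; $\pi:P\to M$ is the codomain map; $G=P^{-1}P:=\Phi( *,* )$ acts on $P$ from the right by precomposition, freely and transitively on fibres; for $x,z$ in one fibre, $x^{-1}z\in G$ is computed in $\Phi$. $PP^{-1}$ is the full subgroupoid of $\Phi$ on $M$ (arrows are composites $yx^{-1}$), acting on $P$ from the left by postcomposition. Composition is right to left. $M$ and $P$ carry reflexive symmetric neighbour relations $\sim$; an infinitesimal $k$-simplex is a $(k+1)$-tuple of mutual neighbours; $\pi$ preserves $\sim$; for every infinitesimal $k$-simplex $(a_0,\dots,a_k)$ in $M$ and every $x_0$ over $a_0$ there is an infinitesimal $k$-simplex in $P$ starting at $x_0$ lying over it; the right action of each $g\in G$ preserves $\sim$. The gauge group bundle $\mathbf{gauge}(PP^{-1})$ is the group bundle over $M$ whose fibre over $a$ is the group $PP^{-1}(a,a)$ of endo-arrows at $a$. A $\mathbf{gauge}(PP^{-1})$-valued $k$-form on $M$ assigns to each infinitesimal $k$-simplex $(a_0,\dots,a_k)$ in $M$ an element of $PP^{-1}(a_0,a_0)$. A $G$-valued $k$-form on $P$ assigns an element of $G$ to each infinitesimal $k$-simplex in $P$; it is horizontal if $\theta(u_0,u_1,\dots,u_k)=\theta(u_0,u_1g_1,\dots,u_kg_k)$ whenever $(u_0,u_1g_1,\dots,u_kg_k)$ is still an infinitesimal simplex, and equivariant if $\theta(u_0g,\dots,u_kg)=g^{-1}\theta(u_0,\dots,u_k)g$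 for all infinitesimal $k$-simplices and all $g\in G$. *)

theory Defs
  imports Main
begin

section \<open>Groupoids (composition right to left: cmp g f = g after f)\<close>

record ('o, 'a) gpd =
  Obj  :: "'o set"
  Arr  :: "'a set"
  src  :: "'a \<Rightarrow> 'o"
  tgt  :: "'a \<Rightarrow> 'o"
  cmp  :: "'a \<Rightarrow> 'a \<Rightarrow> 'a"
  idt  :: "'o \<Rightarrow> 'a"
  ginv :: "'a \<Rightarrow> 'a"

definition groupoid :: "('o, 'a) gpd \<Rightarrow> bool" where
  "groupoid \<Phi> \<longleftrightarrow>
     (\<forall>f\<in>Arr \<Phi>. src \<Phi> f \<in> Obj \<Phi> \<and> tgt \<Phi> f \<in> Obj \<Phi>) \<and>
     (\<forall>a\<in>Obj \<Phi>. idt \<Phi> a \<in> Arr \<Phi> \<and> src \<Phi> (idt \<Phi> a) = a \<and> tgt \<Phi> (idt \<Phi> a) = a) \<and>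
     (\<forall>f\<in>Arr \<Phi>. \<forall>g\<in>Arr \<Phi>. src \<Phi> g = tgt \<Phi> f \<longrightarrow>
        cmp \<Phi> g f \<in> Arr \<Phi> \<and> src \<Phi> (cmp \<Phi> g f) = src \<Phi> f \<and> tgt \<Phi> (cmp \<Phi> g f) = tgt \<Phi> g) \<and>
     (\<forall>f\<in>Arr \<Phi>. \<forall>g\<in>Arr \<Phi>. \<forall>h\<in>Arr \<Phi>. src \<Phi> g = tgt \<Phi> f \<longrightarrow> src \<Phi> h = tgt \<Phi> g \<longrightarrow>
        cmp \<Phi> h (cmp \<Phi> g f) = cmp \<Phi> (cmp \<Phi> h g) f) \<and>
     (\<forall>f\<in>Arr \<Phi>. cmp \<Phi> f (idt \<Phi> (src \<Phi> f)) = f \<and> cmp \<Phi> (idt \<Phi> (tgt \<Phi> f)) f = f) \<and>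
     (\<forall>f\<in>Arr \<Phi>. ginv \<Phi> f \<in> Arr \<Phi> \<and> src \<Phi> (ginv \<Phi> f) = tgt \<Phi> f \<and> tgt \<Phi> (ginv \<Phi> f) = src \<Phi> f \<and>
        cmp \<Phi> (ginv \<Phi> f) f = idt \<Phi> (src \<Phi> f) \<and> cmp \<Phi> f (ginv \<Phi> f) = idt \<Phi> (tgt \<Phi> f))"

text \<open>P: arrows from the base point star to objects of M; the projection is tgt.\<close>
definition Pset :: "('o, 'a) gpd \<Rightarrow> 'o set \<Rightarrow> 'o \<Rightarrow> 'a set" where
  "Pset \<Phi> M star = {x \<in> Arr \<Phi>. src \<Phi> x = star \<and> tgt \<Phi> x \<in> M}"

definition Gset :: "('o, 'a) gpd \<Rightarrow> 'o \<Rightarrow> 'a set" where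
  "Gset \<Phi> star = {g \<in> Arr \<Phi>. src \<Phi> g = star \<and> tgt \<Phi> g = star}"

definition gauge_fibre :: "('o, 'a) gpd \<Rightarrow> 'o \<Rightarrow> 'a set" where
  "gauge_fibre \<Phi> a = {f \<in> Arr \<Phi>. src \<Phi> f = a \<and> tgt \<Phi> f = a}"

definition isimp :: "('b \<Rightarrow> 'b \<Rightarrow> bool) \<Rightarrow> 'b set \<Rightarrow> nat \<Rightarrow> 'b list \<Rightarrow> bool" where
  "isimp nb S k xs \<longleftrightarrow> length xs = Suc k \<and> set xs \<subseteq> S \<and> (\<forall>x\<in>set xs. \<forall>y\<in>set xs. nb x y)"

definition refl_sym_on :: "'b set \<Rightarrow> ('b \<Rightarrow> 'b \<Rightarrow> bool) \<Rightarrow> bool" where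
  "refl_sym_on S nb \<longleftrightarrow> (\<forall>x\<in>S. nb x x) \<and> (\<forall>x\<in>S. \<forall>y\<in>S. nb x y \<longrightarrow> nb y x)"

definition pfb_setting ::
  "('o, 'a) gpd \<Rightarrow> 'o set \<Rightarrow> 'o \<Rightarrow> ('o \<Rightarrow> 'o \<Rightarrow> bool) \<Rightarrow> ('a \<Rightarrow> 'a \<Rightarrow> bool) \<Rightarrow> bool" where
  "pfb_setting \<Phi> M star nbM nbP \<longleftrightarrow>
     groupoid \<Phi> \<and> M \<subseteq> Obj \<Phi> \<and> star \<in> Obj \<Phi> \<and> star \<notin> M \<and>
     \<comment> \<open>PP^{-1} is the full subgroupoid on M, its arrows being the composites y x^{-1}\<close>
     (\<forall>f\<in>Arr \<Phi>. src \<Phi> f \<in> M \<longrightarrow> tgt \<Phi> f \<in> M \<longrightarrow>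
        (\<exists>x\<in>Pset \<Phi> M star. \<exists>y\<in>Pset \<Phi> M star. f = cmp \<Phi> y (ginv \<Phi> x))) \<and>
     refl_sym_on M nbM \<and> refl_sym_on (Pset \<Phi> M star) nbP \<and>
     \<comment> \<open>the projection preserves the neighbour relation\<close>
     (\<forall>u\<in>Pset \<Phi> M star. \<forall>v\<in>Pset \<Phi> M star. nbP u v \<longrightarrow> nbM (tgt \<Phi> u) (tgt \<Phi> v)) \<and>
     \<comment> \<open>lifting of infinitesimal simplices\<close>
     (\<forall>k as x0. isimp nbM M k as \<longrightarrow> x0 \<in> Pset \<Phi> M star \<longrightarrow> tgt \<Phi> x0 = hd as \<longrightarrow>
        (\<exists>us. isimp nbP (Pset \<Phi> M star) k us \<and> hd us = x0 \<and> map (tgt \<Phi>) us = as)) \<and>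
     \<comment> \<open>the right action of each g in G preserves the neighbour relation\<close>
     (\<forall>g\<in>Gset \<Phi> star. \<forall>u\<in>Pset \<Phi> M star. \<forall>v\<in>Pset \<Phi> M star.
        nbP u v \<longrightarrow> nbP (cmp \<Phi> u g) (cmp \<Phi> v g))"

text \<open>Forms are functions on lists; to identify forms agreeing on all simplices we use
  the extensional convention that a form takes the value undefined off simplices.\<close>

definition horizontal_equivariant_forms ::
  "('o, 'a) gpd \<Rightarrow> 'o set \<Rightarrow> 'o \<Rightarrow> ('a \<Rightarrow> 'a \<Rightarrow> bool) \<Rightarrow> nat \<Rightarrow> ('a list \<Rightarrow> 'a) set" where
  "horizontal_equivariant_forms \<Phi> M star nbP k =
     {\<theta>. (\<forall>us. isimp nbP (Pset \<Phi> M star) k us \<longrightarrow> \<theta> us \<in> Gset \<Phi> star) \<and>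
          (\<forall>us. \<not> isimp nbP (Pset \<Phi> M star) k us \<longrightarrow> \<theta> us = undefined) \<and>
          \<comment> \<open>horizontal\<close>
          (\<forall>us gs. isimp nbP (Pset \<Phi> M star) k us \<longrightarrow> length gs = k \<longrightarrow> set gs \<subseteq> Gset \<Phi> star \<longrightarrow>
              isimp nbP (Pset \<Phi> M star) k (hd us # map2 (cmp \<Phi>) (tl us) gs) \<longrightarrow>
              \<theta> (hd us # map2 (cmp \<Phi>) (tl us) gs) = \<theta> us) \<and>
          \<comment> \<open>equivariant\<close>
          (\<forall>us g. isimp nbP (Pset \<Phi> M star) k us \<longrightarrow> g \<in> Gset \<Phi> star \<longrightarrow>
              \<theta> (map (\<lambda>u. cmp \<Phi> u g) us) = cmp \<Phi> (ginv \<Phi> g) (cmp \<Phi> (\<theta> us) g))}"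

definition gauge_forms ::
  "('o, 'a) gpd \<Rightarrow> 'o set \<Rightarrow> ('o \<Rightarrow> 'o \<Rightarrow> bool) \<Rightarrow> nat \<Rightarrow> ('o list \<Rightarrow> 'a) set" where
  "gauge_forms \<Phi> M nbM k =
     {\<alpha>. (\<forall>as. isimp nbM M k as \<longrightarrow> \<alpha> as \<in> gauge_fibre \<Phi> (hd as)) \<and>
          (\<forall>as. \<not> isimp nbM M k as \<longrightarrow> \<alpha> as = undefined)}"

end

theory Submission
  imports Defs
begin

locale pfb =
  fixes \<Phi> :: "('o, 'a) gpd" and M :: "'o set" and star :: 'o
    and nbM :: "'o \<Rightarrow> 'o \<Rightarrow> bool" and nbP :: "'a \<Rightarrow> 'a \<Rightarrow> bool"
  assumes S: "pfb_setting \<Phi> M star nbM nbP"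
begin

abbreviation "P \<equiv> Pset \<Phi> M star"
abbreviation "G \<equiv> Gset \<Phi> star"
abbreviation "c \<equiv> cmp \<Phi>"
abbreviation "i \<equiv> ginv \<Phi>"

lemma gpd: "groupoid \<Phi>" using S unfolding pfb_setting_def by simp

lemma comp_props[simp]:
  "f \<in> Arr \<Phi> \<Longrightarrow> g \<in> Arr \<Phi> \<Longrightarrow> src \<Phi> g = tgt \<Phi> f \<Longrightarrow> c g f \<in> Arr \<Phi>"
  "f \<in> Arr \<Phi> \<Longrightarrow> g \<in> Arr \<Phi> \<Longrightarrow> src \<Phi> g = tgt \<Phi> f \<Longrightarrow> src \<Phi> (c g f) = src \<Phi> f"
  "f \<in> Arr \<Phi> \<Longrightarrow> g \<in> Arr \<Phi> \<Longrightarrow> src \<Phi> g = tgt \<Phi> f \<Longrightarrow> tgt \<Phi> (c g f) = tgt \<Phi> g"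
  using gpd unfolding groupoid_def by auto

lemma inv_props[simp]:
  "f \<in> Arr \<Phi> \<Longrightarrow> i f \<in> Arr \<Phi>"
  "f \<in> Arr \<Phi> \<Longrightarrow> src \<Phi> (i f) = tgt \<Phi> f"
  "f \<in> Arr \<Phi> \<Longrightarrow> tgt \<Phi> (i f) = src \<Phi> f"
  "f \<in> Arr \<Phi> \<Longrightarrow> c (i f) f = idt \<Phi> (src \<Phi> f)"
  "f \<in> Arr \<Phi> \<Longrightarrow> c f (i f) = idt \<Phi> (tgt \<Phi> f)"
  using gpd unfolding groupoid_def by auto

lemma assoc[simp]:
  "f \<in> Arr \<Phi> \<Longrightarrow> g \<in> Arr \<Phi> \<Longrightarrow> h \<in> Arr \<Phi> \<Longrightarrow> src \<Phi> g = tgt \<Phi> f \<Longrightarrow> src \<Phi> h = tgt \<Phi> g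
   \<Longrightarrow> c (c h g) f = c h (c g f)"
  using gpd unfolding groupoid_def by metis

lemma rid[simp]: "f \<in> Arr \<Phi> \<Longrightarrow> a = src \<Phi> f \<Longrightarrow> c f (idt \<Phi> a) = f"
  and lid[simp]: "f \<in> Arr \<Phi> \<Longrightarrow> a = tgt \<Phi> f \<Longrightarrow> c (idt \<Phi> a) f = f"
  using gpd unfolding groupoid_def by auto

lemma cancel_l[simp]: "f \<in> Arr \<Phi> \<Longrightarrow> g \<in> Arr \<Phi> \<Longrightarrow> src \<Phi> f = tgt \<Phi> g \<Longrightarrow> c (i f) (c f g) = g"
proof -
  assume a: "f \<in> Arr \<Phi>" "g \<in> Arr \<Phi>" "src \<Phi> f = tgt \<Phi> g"
  have "c (i f) (c f g) = c (c (i f) f) g" using a by (subst assoc) auto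
  also have "\<dots> = g" using a by (simp del: assoc)
  finally show ?thesis .
qed

lemma cancel_l'[simp]: "f \<in> Arr \<Phi> \<Longrightarrow> g \<in> Arr \<Phi> \<Longrightarrow> tgt \<Phi> f = tgt \<Phi> g \<Longrightarrow> c f (c (i f) g) = g"
proof -
  assume a: "f \<in> Arr \<Phi>" "g \<in> Arr \<Phi>" "tgt \<Phi> f = tgt \<Phi> g"
  have "c f (c (i f) g) = c (c f (i f)) g" using a by (subst assoc) auto
  also have "\<dots> = g" using a by (simp del: assoc)
  finally show ?thesis .
qed

lemma inv_cmp[simp]: "f \<in> Arr \<Phi> \<Longrightarrow> g \<in> Arr \<Phi> \<Longrightarrow> src \<Phi> g = tgt \<Phi> f \<Longrightarrow> i (c g f) = c (i f) (i g)"
proof -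
  assume a: "f \<in> Arr \<Phi>" "g \<in> Arr \<Phi>" "src \<Phi> g = tgt \<Phi> f"
  let ?x = "c g f" and ?y = "c (i f) (i g)"
  have xy: "c ?x ?y = idt \<Phi> (tgt \<Phi> ?x)" using a by simp
  have "c (i ?x) (c ?x ?y) = ?y" using a by (intro cancel_l) auto
  then show ?thesis using xy a by simp
qed

lemma P_props: "u \<in> P \<Longrightarrow> u \<in> Arr \<Phi> \<and> src \<Phi> u = star \<and> tgt \<Phi> u \<in> M"
  unfolding Pset_def by auto
lemma G_props: "g \<in> G \<Longrightarrow> g \<in> Arr \<Phi> \<and> src \<Phi> g = star \<and> tgt \<Phi> g = star"
  unfolding Gset_def by auto



lemma S_parts:
  "M \<subseteq> Obj \<Phi>"
  "\<And>f. f\<in>Arr \<Phi> \<Longrightarrow> src \<Phi> f \<in> M \<Longrightarrow> tgt \<Phi> f \<in> M \<Longrightarrow>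
        (\<exists>x\<in>P. \<exists>y\<in>P. f = c y (i x))"
  "\<And>u v. u\<in>P \<Longrightarrow> v\<in>P \<Longrightarrow> nbP u v \<Longrightarrow> nbM (tgt \<Phi> u) (tgt \<Phi> v)"
  "\<And>k as x0. isimp nbM M k as \<Longrightarrow> x0 \<in> P \<Longrightarrow> tgt \<Phi> x0 = hd as \<Longrightarrow>
        (\<exists>us. isimp nbP P k us \<and> hd us = x0 \<and> map (tgt \<Phi>) us = as)"
  "\<And>g u v. g\<in>G \<Longrightarrow> u\<in>P \<Longrightarrow> v\<in>P \<Longrightarrow> nbP u v \<Longrightarrow> nbP (c u g) (c v g)"
  using S unfolding pfb_setting_def by (elim conjE; assumption | blast)+

lemma nbP_G: "g \<in> G \<Longrightarrow> u \<in> P \<Longrightarrow> v \<in> P \<Longrightarrow> nbP u v \<Longrightarrow> nbP (c u g) (c v g)"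
  by (rule S_parts(5))

lemma PG_in_P: "u \<in> P \<Longrightarrow> g \<in> G \<Longrightarrow> c u g \<in> P"
proof -
  assume u: "u \<in> P" and g: "g \<in> G"
  have a: "u \<in> Arr \<Phi>" "src \<Phi> u = star" "tgt \<Phi> u \<in> M" using P_props[OF u] by auto
  have b: "g \<in> Arr \<Phi>" "src \<Phi> g = star" "tgt \<Phi> g = star" using G_props[OF g] by auto
  have "c u g \<in> Arr \<Phi>" "src \<Phi> (c u g) = star" "tgt \<Phi> (c u g) = tgt \<Phi> u"
    using comp_props[of g u] a b by auto
  then show ?thesis using a unfolding Pset_def by simp
qed

lemma isimp_ne: "isimp nb S k xs \<Longrightarrow> xs \<noteq> [] \<and> hd xs \<in> S"
  unfolding isimp_def by (cases xs) auto

lemma proj: "isimp nbP P k us \<Longrightarrow> isimp nbM M k (map (tgt \<Phi>) us)"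
proof -
  assume a: "isimp nbP P k us"
  have l: "length us = Suc k" and s: "set us \<subseteq> P" and n: "\<forall>x\<in>set us. \<forall>y\<in>set us. nbP x y"
    using a unfolding isimp_def by auto
  have "set (map (tgt \<Phi>) us) \<subseteq> M" using s P_props by force
  moreover have "\<forall>x\<in>set (map (tgt \<Phi>) us). \<forall>y\<in>set (map (tgt \<Phi>) us). nbM x y"
    using n s S_parts(3) by (simp del: Pset_def) blast
  ultimately show ?thesis using l unfolding isimp_def by simp
qed

lemma point_over: "a \<in> M \<Longrightarrow> \<exists>x\<in>P. tgt \<Phi> x = a"
proof -
  assume a: "a \<in> M"
  have ob: "a \<in> Obj \<Phi>" using a S_parts(1) by auto
  hence I: "idt \<Phi> a \<in> Arr \<Phi>" "src \<Phi> (idt \<Phi> a) = a" "tgt \<Phi> (idt \<Phi> a) = a"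
    using gpd unfolding groupoid_def by auto
  then obtain x y where xy: "x \<in> P" "y \<in> P" "idt \<Phi> a = c y (i x)"
    using S_parts(2) a by metis
  have "tgt \<Phi> (c y (i x)) = tgt \<Phi> y" using xy P_props by simp
  then show ?thesis using xy I by (metis P_props)
qed

lemma lift_ex: "isimp nbM M k as \<Longrightarrow> \<exists>us. isimp nbP P k us \<and> map (tgt \<Phi>) us = as"
proof -
  assume a: "isimp nbM M k as"
  then obtain x where "x \<in> P" "tgt \<Phi> x = hd as" using point_over isimp_ne by metis
  then show ?thesis using S_parts(4) a by blast
qed

definition HE where "HE k = horizontal_equivariant_forms \<Phi> M star nbP k"
definition GF where "GF k = gauge_forms \<Phi> M nbM k"

lemma HE_D:
  assumes "\<theta> \<in> HE k"
  shows "isimp nbP P k us \<Longrightarrow> \<theta> us \<in> G"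
    and "\<not> isimp nbP P k us \<Longrightarrow> \<theta> us = undefined"
    and "isimp nbP P k us \<Longrightarrow> length gs = k \<Longrightarrow> set gs \<subseteq> G \<Longrightarrow>
              isimp nbP P k (hd us # map2 c (tl us) gs) \<Longrightarrow>
              \<theta> (hd us # map2 c (tl us) gs) = \<theta> us"
    and "isimp nbP P k us \<Longrightarrow> g \<in> G \<Longrightarrow>
              \<theta> (map (\<lambda>u. c u g) us) = c (i g) (c (\<theta> us) g)"
  using assms unfolding HE_def horizontal_equivariant_forms_def by auto

lemma indep:
  assumes th: "\<theta> \<in> HE k" and us: "isimp nbP P k us" and vs: "isimp nbP P k vs"
    and m: "map (tgt \<Phi>) us = map (tgt \<Phi>) vs"
  shows "c (c (hd vs) (\<theta> vs)) (i (hd vs)) = c (c (hd us) (\<theta> us)) (i (hd us))"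
proof -
  define u0 where "u0 = hd us"
  define v0 where "v0 = hd vs"
  have lus: "length us = Suc k" and lvs: "length vs = Suc k" using us vs unfolding isimp_def by auto
  have u0: "u0 \<in> P" using us isimp_ne u0_def by metis
  have v0: "v0 \<in> P" using vs isimp_ne v0_def by metis
  have tuv: "tgt \<Phi> u0 = tgt \<Phi> v0" using m lus lvs unfolding u0_def v0_def
    by (metis hd_map isimp_ne us vs)
  define g0 where "g0 = c (i u0) v0"
  have g0: "g0 \<in> G" using u0 v0 tuv P_props unfolding g0_def Gset_def by auto
  define us' where "us' = map (\<lambda>u. c u g0) us"
  have usP: "\<And>j. j < Suc k \<Longrightarrow> us ! j \<in> P" using us lus unfolding isimp_def by auto
  have vsP: "\<And>j. j < Suc k \<Longrightarrow> vs ! j \<in> P" using vs lvs unfolding isimp_def by auto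
  have tj: "\<And>j. j < Suc k \<Longrightarrow> tgt \<Phi> (us ! j) = tgt \<Phi> (vs ! j)"
    using m lus lvs by (metis nth_map)
  have us': "isimp nbP P k us'"
    using us g0 PG_in_P nbP_G unfolding isimp_def us'_def by (auto intro!: nbP_G)
  have lus': "length us' = Suc k" using lus us'_def by simp
  have us'j: "\<And>j. j < Suc k \<Longrightarrow> us' ! j = c (us ! j) g0" using lus us'_def by simp
  define gs where "gs = map2 (\<lambda>u v. c (i u) v) (tl us') (tl vs)"
  have lgs: "length gs = k" using lus' lvs gs_def by simp
  have gsj: "\<And>j. j < k \<Longrightarrow> gs ! j = c (i (us' ! Suc j)) (vs ! Suc j)"
    using lus' lvs gs_def by (simp add: nth_tl)
  have gsG: "set gs \<subseteq> G"
  proof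
    fix g assume "g \<in> set gs"
    then obtain j where j: "j < k" "g = gs ! j" using lgs by (metis in_set_conv_nth)
    have "us ! Suc j \<in> P" "vs ! Suc j \<in> P" "tgt \<Phi> (us ! Suc j) = tgt \<Phi> (vs ! Suc j)"
      using j usP vsP tj by auto
    then have a: "us ! Suc j \<in> Arr \<Phi>" "src \<Phi> (us ! Suc j) = star" "vs ! Suc j \<in> Arr \<Phi>"
       "src \<Phi> (vs ! Suc j) = star" "tgt \<Phi> (us ! Suc j) = tgt \<Phi> (vs ! Suc j)" using P_props by auto
    have b: "g0 \<in> Arr \<Phi>" "src \<Phi> g0 = star" "tgt \<Phi> g0 = star" using g0 G_props by auto
    have e: "g = c (i (c (us ! Suc j) g0)) (vs ! Suc j)" using j gsj us'j by simp
    have "c (us ! Suc j) g0 \<in> Arr \<Phi>" "src \<Phi> (c (us ! Suc j) g0) = star" "tgt \<Phi> (c (us ! Suc j) g0) = tgt \<Phi> (vs ! Suc j)"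
      using a b by (simp_all del: assoc inv_cmp)
    then have "g \<in> Arr \<Phi> \<and> src \<Phi> g = star \<and> tgt \<Phi> g = star" unfolding e using a b by (simp del: assoc inv_cmp)
    then show "g \<in> G" unfolding Gset_def by simp
  qed
  have eq: "hd us' # map2 c (tl us') gs = vs"
  proof (rule nth_equalityI)
    show "length (hd us' # map2 c (tl us') gs) = length vs" using lus' lgs lvs by simp
    fix j assume "j < length (hd us' # map2 c (tl us') gs)"
    hence j: "j < Suc k" using lus' lgs by simp
    show "(hd us' # map2 c (tl us') gs) ! j = vs ! j"
    proof (cases j)
      case 0
      have "hd us' = c u0 g0" using lus unfolding us'_def u0_def by (cases us) auto
      also have "\<dots> = v0" unfolding g0_def using u0 v0 tuv P_props by auto
      finally show ?thesis using 0 lvs unfolding v0_def by (cases vs) auto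
    next
      case (Suc j')
      hence j': "j' < k" using j by simp
      have "(hd us' # map2 c (tl us') gs) ! j = c (us' ! Suc j') (gs ! j')"
        using Suc j' lus' lgs by (simp add: nth_tl)
      also have "\<dots> = vs ! j"
      proof -
        have a: "us ! j \<in> Arr \<Phi>" "src \<Phi> (us ! j) = star" "vs ! j \<in> Arr \<Phi>"
          "tgt \<Phi> (us ! j) = tgt \<Phi> (vs ! j)" using usP[OF j] vsP[OF j] tj[OF j] P_props by auto
        have b: "g0 \<in> Arr \<Phi>" "src \<Phi> g0 = star" "tgt \<Phi> g0 = star" using g0 G_props by auto
        have "c (us ! j) g0 \<in> Arr \<Phi>" "tgt \<Phi> (c (us ! j) g0) = tgt \<Phi> (vs ! j)"
          using a b by (simp_all del: assoc inv_cmp)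
        then have "c (c (us ! j) g0) (c (i (c (us ! j) g0)) (vs ! j)) = vs ! j"
          using a by (intro cancel_l') auto
        then show ?thesis using gsj[OF j'] us'j[of "Suc j'"] j' Suc by simp
      qed
      finally show ?thesis .
    qed
  qed
  have "\<theta> vs = \<theta> us'" using HE_D(3)[OF th us' lgs gsG] eq vs by simp
  also have "\<dots> = c (i g0) (c (\<theta> us) g0)" using HE_D(4)[OF th us g0] us'_def by simp
  finally have tv: "\<theta> vs = c (i g0) (c (\<theta> us) g0)" .
  have tu: "\<theta> us \<in> G" using HE_D(1)[OF th us] .
  have v0e: "v0 = c u0 g0" unfolding g0_def using u0 v0 tuv P_props by auto
  show ?thesis
  proof -
    have a: "u0 \<in> Arr \<Phi>" "src \<Phi> u0 = star" using u0 P_props by auto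
    have b: "g0 \<in> Arr \<Phi>" "src \<Phi> g0 = star" "tgt \<Phi> g0 = star" using g0 G_props by auto
    have t: "\<theta> us \<in> Arr \<Phi>" "src \<Phi> (\<theta> us) = star" "tgt \<Phi> (\<theta> us) = star" using tu G_props by auto
    have "c (c (c u0 g0) (c (i g0) (c (\<theta> us) g0))) (i (c u0 g0)) = c (c u0 (\<theta> us)) (i u0)"
      using a b t by simp
    then show ?thesis using tv v0e u0_def v0_def by simp
  qed
qed


definition lift where "lift k as = (SOME us. isimp nbP P k us \<and> map (tgt \<Phi>) us = as)"
definition Fm where "Fm k \<theta> = (\<lambda>as. if isimp nbM M k as then
   c (c (hd (lift k as)) (\<theta> (lift k as))) (i (hd (lift k as))) else undefined)"
definition Th where "Th k \<alpha> = (\<lambda>us. if isimp nbP P k us then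
   c (i (hd us)) (c (\<alpha> (map (tgt \<Phi>) us)) (hd us)) else undefined)"

lemma F_val:
  assumes th: "\<theta> \<in> HE k" and us: "isimp nbP P k us"
  shows "Fm k \<theta> (map (tgt \<Phi>) us) = c (c (hd us) (\<theta> us)) (i (hd us))"
proof -
  have as: "isimp nbM M k (map (tgt \<Phi>) us)" using proj[OF us] .
  let ?l = "lift k (map (tgt \<Phi>) us)"
  have "isimp nbP P k ?l \<and> map (tgt \<Phi>) ?l = map (tgt \<Phi>) us"
    unfolding lift_def using someI_ex[OF lift_ex[OF as]] .
  then show ?thesis unfolding Fm_def using as indep[OF th us] by simp
qed

lemma GF_D: assumes "\<alpha> \<in> GF k"
  shows "isimp nbM M k as \<Longrightarrow> \<alpha> as \<in> gauge_fibre \<Phi> (hd as)"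
    and "\<not> isimp nbM M k as \<Longrightarrow> \<alpha> as = undefined"
  using assms unfolding GF_def gauge_forms_def by auto

lemma hd_P: "isimp nbP P k us \<Longrightarrow> hd us \<in> Arr \<Phi> \<and> src \<Phi> (hd us) = star \<and> tgt \<Phi> (hd us) \<in> M"
  using isimp_ne P_props by metis

lemma hd_map_tgt: "isimp nbP P k us \<Longrightarrow> hd (map (tgt \<Phi>) us) = tgt \<Phi> (hd us)"
  using isimp_ne hd_map by metis

lemma F_in: assumes th: "\<theta> \<in> HE k" shows "Fm k \<theta> \<in> GF k"
proof -
  have "Fm k \<theta> as \<in> gauge_fibre \<Phi> (hd as)" if as: "isimp nbM M k as" for as
  proof -
    obtain us where us: "isimp nbP P k us" "map (tgt \<Phi>) us = as" using lift_ex[OF as] by blast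
    have a: "hd us \<in> Arr \<Phi>" "src \<Phi> (hd us) = star" using hd_P[OF us(1)] by auto
    have t: "\<theta> us \<in> Arr \<Phi>" "src \<Phi> (\<theta> us) = star" "tgt \<Phi> (\<theta> us) = star"
      using HE_D(1)[OF th us(1)] G_props by auto
    have "c (c (hd us) (\<theta> us)) (i (hd us)) \<in> gauge_fibre \<Phi> (tgt \<Phi> (hd us))"
      unfolding gauge_fibre_def using a t by (simp del: assoc)
    then show ?thesis using F_val[OF th us(1)] us hd_map_tgt[OF us(1)] by simp
  qed
  moreover have "\<not> isimp nbM M k as \<Longrightarrow> Fm k \<theta> as = undefined" for as unfolding Fm_def by simp
  ultimately show ?thesis unfolding GF_def gauge_forms_def by blast
qed

lemma map_tgt_act: "length gs = length xs \<Longrightarrow> set xs \<subseteq> P \<Longrightarrow> set gs \<subseteq> G \<Longrightarrow>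
   map (tgt \<Phi>) (map2 c xs gs) = map (tgt \<Phi>) xs"
proof (induction xs arbitrary: gs)
  case Nil then show ?case by simp
next
  case (Cons x xs)
  then obtain g gs' where gs: "gs = g # gs'" by (cases gs) auto
  have "tgt \<Phi> (c x g) = tgt \<Phi> x" using Cons.prems gs P_props G_props by (simp del: assoc)
  then show ?case using Cons gs by simp
qed

lemma isimp_act: "isimp nbP P k us \<Longrightarrow> g \<in> G \<Longrightarrow> isimp nbP P k (map (\<lambda>u. c u g) us)"
  using PG_in_P unfolding isimp_def by (auto intro!: nbP_G)

lemma Th_in: assumes al: "\<alpha> \<in> GF k" shows "Th k \<alpha> \<in> HE k"
proof -
  have val: "Th k \<alpha> us \<in> Arr \<Phi> \<and> src \<Phi> (Th k \<alpha> us) = star \<and> tgt \<Phi> (Th k \<alpha> us) = star"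
    if us: "isimp nbP P k us" for us
  proof -
    have a: "hd us \<in> Arr \<Phi>" "src \<Phi> (hd us) = star" using hd_P[OF us] by auto
    have "\<alpha> (map (tgt \<Phi>) us) \<in> gauge_fibre \<Phi> (tgt \<Phi> (hd us))"
      using GF_D(1)[OF al proj[OF us]] hd_map_tgt[OF us] by simp
    then have b: "\<alpha> (map (tgt \<Phi>) us) \<in> Arr \<Phi>" "src \<Phi> (\<alpha> (map (tgt \<Phi>) us)) = tgt \<Phi> (hd us)"
        "tgt \<Phi> (\<alpha> (map (tgt \<Phi>) us)) = tgt \<Phi> (hd us)" unfolding gauge_fibre_def by auto
    show ?thesis unfolding Th_def using us a b by (simp del: assoc)
  qed
  have 1: "\<forall>us. isimp nbP P k us \<longrightarrow> Th k \<alpha> us \<in> G" using val unfolding Gset_def by simp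
  have 2: "\<forall>us. \<not> isimp nbP P k us \<longrightarrow> Th k \<alpha> us = undefined" unfolding Th_def by simp
  have 3: "Th k \<alpha> (hd us # map2 c (tl us) gs) = Th k \<alpha> us"
    if us: "isimp nbP P k us" and gs: "length gs = k" "set gs \<subseteq> G"
      and us2: "isimp nbP P k (hd us # map2 c (tl us) gs)" for us gs
  proof -
    have ne: "us = hd us # tl us" using isimp_ne[OF us] by simp
    have "set (tl us) \<subseteq> set us" by (cases us) auto
    then have "set (tl us) \<subseteq> P" "length (tl us) = k" using us unfolding isimp_def
      by auto
    then have "map (tgt \<Phi>) (hd us # map2 c (tl us) gs) = map (tgt \<Phi>) us"
      using map_tgt_act[of gs "tl us"] gs ne by (metis list.simps(9))
    then show ?thesis unfolding Th_def using us us2 by simp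
  qed
  have 4: "Th k \<alpha> (map (\<lambda>u. c u g) us) = c (i g) (c (Th k \<alpha> us) g)"
    if us: "isimp nbP P k us" and g: "g \<in> G" for us g
  proof -
    have us': "isimp nbP P k (map (\<lambda>u. c u g) us)" using isimp_act[OF us g] .
    have a: "hd us \<in> Arr \<Phi>" "src \<Phi> (hd us) = star" using hd_P[OF us] by auto
    have gg: "g \<in> Arr \<Phi>" "src \<Phi> g = star" "tgt \<Phi> g = star" using g G_props by auto
    have "set us \<subseteq> P" using us unfolding isimp_def by auto
    then have mt: "map (tgt \<Phi>) (map (\<lambda>u. c u g) us) = map (tgt \<Phi>) us"
      using P_props gg by (auto simp del: assoc)
    have hd': "hd (map (\<lambda>u. c u g) us) = c (hd us) g" using isimp_ne[OF us] by (simp add: hd_map)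
    have "\<alpha> (map (tgt \<Phi>) us) \<in> gauge_fibre \<Phi> (tgt \<Phi> (hd us))"
      using GF_D(1)[OF al proj[OF us]] hd_map_tgt[OF us] by simp
    then have b: "\<alpha> (map (tgt \<Phi>) us) \<in> Arr \<Phi>" "src \<Phi> (\<alpha> (map (tgt \<Phi>) us)) = tgt \<Phi> (hd us)"
        "tgt \<Phi> (\<alpha> (map (tgt \<Phi>) us)) = tgt \<Phi> (hd us)" unfolding gauge_fibre_def by auto
    have "Th k \<alpha> (map (\<lambda>u. c u g) us) = c (i (c (hd us) g)) (c (\<alpha> (map (tgt \<Phi>) us)) (c (hd us) g))"
      unfolding Th_def hd' mt using us' by simp
    then show ?thesis unfolding Th_def using us a b gg by simp
  qed
  show ?thesis unfolding HE_def horizontal_equivariant_forms_def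
    using 1 2 3 4 by blast
qed

lemma F_Th: assumes al: "\<alpha> \<in> GF k" shows "Fm k (Th k \<alpha>) = \<alpha>"
proof
  fix as show "Fm k (Th k \<alpha>) as = \<alpha> as"
  proof (cases "isimp nbM M k as")
    case True
    obtain us where us: "isimp nbP P k us" "map (tgt \<Phi>) us = as" using lift_ex[OF True] by blast
    have a: "hd us \<in> Arr \<Phi>" "src \<Phi> (hd us) = star" using hd_P[OF us(1)] by auto
    have "\<alpha> as \<in> gauge_fibre \<Phi> (tgt \<Phi> (hd us))"
      using GF_D(1)[OF al True] hd_map_tgt[OF us(1)] us(2) by simp
    then have b: "\<alpha> as \<in> Arr \<Phi>" "src \<Phi> (\<alpha> as) = tgt \<Phi> (hd us)"
        "tgt \<Phi> (\<alpha> as) = tgt \<Phi> (hd us)" unfolding gauge_fibre_def by auto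
    have "Fm k (Th k \<alpha>) as = c (c (hd us) (Th k \<alpha> us)) (i (hd us))"
      using F_val[OF Th_in[OF al] us(1)] us(2) by simp
    also have "\<dots> = \<alpha> as" unfolding Th_def using us a b by simp
    finally show ?thesis .
  next
    case False then show ?thesis using GF_D(2)[OF al] unfolding Fm_def by simp
  qed
qed

lemma Th_F: assumes th: "\<theta> \<in> HE k" shows "\<theta> = Th k (Fm k \<theta>)"
proof
  fix us show "\<theta> us = Th k (Fm k \<theta>) us"
  proof (cases "isimp nbP P k us")
    case True
    have a: "hd us \<in> Arr \<Phi>" "src \<Phi> (hd us) = star" using hd_P[OF True] by auto
    have t: "\<theta> us \<in> Arr \<Phi>" "src \<Phi> (\<theta> us) = star" "tgt \<Phi> (\<theta> us) = star"
      using HE_D(1)[OF th True] G_props by auto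
    show ?thesis unfolding Th_def using True F_val[OF th True] a t by simp
  next
    case False then show ?thesis using HE_D(2)[OF th] unfolding Th_def by simp
  qed
qed

lemma F_inj: "inj_on (Fm k) (HE k)"
  by (rule inj_onI) (metis Th_F)

end

theorem proposition3:
  fixes \<Phi> :: "('o, 'a) gpd" and M :: "'o set" and star :: 'o
    and nbM :: "'o \<Rightarrow> 'o \<Rightarrow> bool" and nbP :: "'a \<Rightarrow> 'a \<Rightarrow> bool" and k :: nat
  assumes "pfb_setting \<Phi> M star nbM nbP"
  shows "\<exists>F. bij_betw F (horizontal_equivariant_forms \<Phi> M star nbP k) (gauge_forms \<Phi> M nbM k) \<and>
     (\<forall>\<theta>\<in>horizontal_equivariant_forms \<Phi> M star nbP k. \<forall>us. isimp nbP (Pset \<Phi> M star) k us \<longrightarrow>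
        cmp \<Phi> (hd us) (\<theta> us) = cmp \<Phi> (F \<theta> (map (tgt \<Phi>) us)) (hd us)) \<and>
     (\<forall>\<theta>\<in>horizontal_equivariant_forms \<Phi> M star nbP k. \<forall>us. isimp nbP (Pset \<Phi> M star) k us \<longrightarrow>
        F \<theta> (map (tgt \<Phi>) us) = cmp \<Phi> (cmp \<Phi> (hd us) (\<theta> us)) (ginv \<Phi> (hd us))) \<and>
     (\<forall>\<alpha>\<in>gauge_forms \<Phi> M nbM k. \<forall>us. isimp nbP (Pset \<Phi> M star) k us \<longrightarrow>
        inv_into (horizontal_equivariant_forms \<Phi> M star nbP k) F \<alpha> us =
          cmp \<Phi> (ginv \<Phi> (hd us)) (cmp \<Phi> (\<alpha> (map (tgt \<Phi>) us)) (hd us)))"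
proof -
  interpret pfb \<Phi> M star nbM nbP using assms by (rule pfb.intro)
  have bij: "bij_betw (Fm k) (HE k) (GF k)"
  proof (rule bij_betw_imageI)
    show "inj_on (Fm k) (HE k)" by (rule F_inj)
    show "Fm k ` HE k = GF k"
    proof
      show "Fm k ` HE k \<subseteq> GF k" using F_in by blast
      show "GF k \<subseteq> Fm k ` HE k"
      proof
        fix \<alpha> assume "\<alpha> \<in> GF k"
        then show "\<alpha> \<in> Fm k ` HE k" using Th_in F_Th by (metis image_eqI)
      qed
    qed
  qed
  have c2: "cmp \<Phi> (hd us) (\<theta> us) = cmp \<Phi> (Fm k \<theta> (map (tgt \<Phi>) us)) (hd us)"
    if th: "\<theta> \<in> HE k" and us: "isimp nbP P k us" for \<theta> us
  proof -
    have a: "hd us \<in> Arr \<Phi>" "src \<Phi> (hd us) = star" using hd_P[OF us] by auto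
    have t: "\<theta> us \<in> Arr \<Phi>" "src \<Phi> (\<theta> us) = star" "tgt \<Phi> (\<theta> us) = star"
      using HE_D(1)[OF th us] G_props by auto
    show ?thesis using F_val[OF th us] a t by simp
  qed
  have c4: "inv_into (HE k) (Fm k) \<alpha> = Th k \<alpha>" if al: "\<alpha> \<in> GF k" for \<alpha>
    by (rule inv_into_f_eq) (auto intro: F_inj Th_in[OF al] F_Th[OF al])
  show ?thesis
    apply (rule exI[of _ "Fm k"])
    using bij c2 F_val c4 unfolding HE_def GF_def Th_def by auto
qed

end
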